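(* Let $M=[a_{ij},b_{ij}]_{i=1,\dots,n;\,j=1,\dots,m}$ and $\widehat M=[\hat a_{ij},\hat b_{ij}]_{i=1,\dots,n;\,j=1,\dots,m}$ be 2-person normal form game matrices of dimensions $n\times m$, and put $c_{ij}=\hat a_{ij}-a_{ij}$, $d_{ij}=\hat b_{ij}-b_{ij}$. Then $\widehat M$ can be obtained from $M$ by an OI-transformation if and only if both (C1) $a_{ij}+b_{ij}=\hat a_{ij}+\hat b_{ij}$ (equivalently $d_{ij}=-c_{ij}$) for all $i\le n$, $j\le m$; and (C2) $c_{ij}+c_{(i+1)(j+1)}=c_{i(j+1)}+c_{(i+1)j}$ for all $i\le n-1$, $j\le m-1$.
   Context: A 2-person normal form game matrix of dimensions $n\times m$ is $M=[a_{ij},b_{ij}]_{i\le n,\,j\le m}$, where $(a_{ij},b_{ij})\in\mathbb{R}^2$ are the payoffs of the row player $A$ and column player $B$ when $A$ plays strategy $A_i$ and $B$ plays $B_j$. A preplay offer by $A$ to $B$ of amount $\delta\ge 0$ contingent on $B_j$ replaces $(a_{ij},b_{ij})$ by $(a_{ij}-\delta,b_{ij}+\delta)$ for every $i$ (other entries unchanged); a preplay offer by $B$ to $A$ of amount $\delta\ge0$ contingent on $A_i$ replaces $(a_{ij},b_{ij})$ by $(a_{ij}+\delta,b_{ij}-\delta)$ for every $j$. Each such map is a POI-transformation; an OI-transformation is a composition of finitely many POI-transformations (all amounts non-negative). $\widehat M$ "can be obtained from $M$ by an OI-transformation" means $\widehat M=\tau(M)$ for some OI-transformation $\tau$. *)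

theory Defs
  imports Main "HOL-Library.Library"
begin

text \<open>A 2-person game matrix of dimensions n x m: entry (i,j) for i < n, j < m
  (0-based indices) is the payoff pair (a_ij, b_ij). Values outside the box are irrelevant.\<close>
type_synonym game = "nat \<Rightarrow> nat \<Rightarrow> real \<times> real"

text \<open>Preplay offer by A to B of amount d contingent on column j.\<close>
definition poiA :: "nat \<Rightarrow> real \<Rightarrow> game \<Rightarrow> game" where
  "poiA j d M = (\<lambda>i k. if k = j then (fst (M i k) - d, snd (M i k) + d) else M i k)"

text \<open>Preplay offer by B to A of amount d contingent on row i.\<close>
definition poiB :: "nat \<Rightarrow> real \<Rightarrow> game \<Rightarrow> game" where
  "poiB i d M = (\<lambda>k j. if k = i then (fst (M k j) + d, snd (M k j) - d) else M k j)"

inductive_set oi_trans :: "nat \<Rightarrow> nat \<Rightarrow> (game \<Rightarrow> game) set" for n m where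
  oi_id: "id \<in> oi_trans n m"
| oi_A: "\<tau> \<in> oi_trans n m \<Longrightarrow> j < m \<Longrightarrow> d \<ge> 0 \<Longrightarrow> poiA j d \<circ> \<tau> \<in> oi_trans n m"
| oi_B: "\<tau> \<in> oi_trans n m \<Longrightarrow> i < n \<Longrightarrow> d \<ge> 0 \<Longrightarrow> poiB i d \<circ> \<tau> \<in> oi_trans n m"

definition obtainable_by_OI :: "nat \<Rightarrow> nat \<Rightarrow> game \<Rightarrow> game \<Rightarrow> bool" where
  "obtainable_by_OI n m M M' \<longleftrightarrow>
     (\<exists>\<tau> \<in> oi_trans n m. \<forall>i<n. \<forall>j<m. \<tau> M i j = M' i j)"

end

theory Submission
  imports Defs
begin

lemma fwd_inv:
  assumes "\<tau> \<in> oi_trans n m"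
  shows "\<exists>x y. \<forall>i j. \<tau> M i j = (fst (M i j) + x i - y j, snd (M i j) - x i + y j)"
  using assms
proof induction
  case oi_id
  show ?case by (rule exI[of _ "\<lambda>_. 0"], rule exI[of _ "\<lambda>_. 0"]) simp
next
  case (oi_A \<tau> j d)
  then obtain x y where h: "\<forall>i j. \<tau> M i j = (fst (M i j) + x i - y j, snd (M i j) - x i + y j)" by blast
  show ?case
    by (rule exI[of _ x], rule exI[of _ "\<lambda>k. y k + (if k = j then d else 0)"])
       (auto simp: poiA_def h)
next
  case (oi_B \<tau> i d)
  then obtain x y where h: "\<forall>i j. \<tau> M i j = (fst (M i j) + x i - y j, snd (M i j) - x i + y j)" by blast
  show ?case
    by (rule exI[of _ "\<lambda>k. x k + (if k = i then d else 0)"], rule exI[of _ y])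
       (auto simp: poiB_def h)
qed

lemma rows:
  assumes "\<forall>i<n. x i \<ge> (0::real)" "k \<le> n"
  shows "\<exists>\<tau>\<in>oi_trans n m. \<forall>M i j. \<tau> M i j =
     (fst (M i j) + (if i<k then x i else 0), snd (M i j) - (if i<k then x i else 0))"
  using assms(2)
proof (induction k)
  case 0
  show ?case by (rule bexI[of _ id]) (auto intro: oi_trans.oi_id)
next
  case (Suc k)
  then obtain \<tau> where t: "\<tau>\<in>oi_trans n m" and h: "\<forall>M i j. \<tau> M i j =
     (fst (M i j) + (if i<k then x i else 0), snd (M i j) - (if i<k then x i else 0))" by auto
  have "poiB k (x k) \<circ> \<tau> \<in> oi_trans n m"
    using t Suc.prems assms(1) by (intro oi_trans.oi_B) auto
  moreover have "\<forall>M i j. (poiB k (x k) \<circ> \<tau>) M i j =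
     (fst (M i j) + (if i<Suc k then x i else 0), snd (M i j) - (if i<Suc k then x i else 0))"
    by (auto simp: poiB_def h)
  ultimately show ?case by blast
qed

lemma cols:
  assumes "\<forall>j<m. y j \<ge> (0::real)" "k \<le> m" "\<tau>0 \<in> oi_trans n m"
  shows "\<exists>\<tau>\<in>oi_trans n m. \<forall>M i j. \<tau> M i j =
     (fst (\<tau>0 M i j) - (if j<k then y j else 0), snd (\<tau>0 M i j) + (if j<k then y j else 0))"
  using assms(2)
proof (induction k)
  case 0
  show ?case by (rule bexI[of _ \<tau>0]) (use assms(3) in auto)
next
  case (Suc k)
  then obtain \<tau> where t: "\<tau>\<in>oi_trans n m" and h: "\<forall>M i j. \<tau> M i j =
     (fst (\<tau>0 M i j) - (if j<k then y j else 0), snd (\<tau>0 M i j) + (if j<k then y j else 0))" by auto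
  have "poiA k (y k) \<circ> \<tau> \<in> oi_trans n m"
    using t Suc.prems assms(1) by (intro oi_trans.oi_A) auto
  moreover have "\<forall>M i j. (poiA k (y k) \<circ> \<tau>) M i j =
     (fst (\<tau>0 M i j) - (if j<Suc k then y j else 0), snd (\<tau>0 M i j) + (if j<Suc k then y j else 0))"
    by (auto simp: poiA_def h)
  ultimately show ?case by blast
qed

lemma c2_decomp:
  fixes c :: "nat \<Rightarrow> nat \<Rightarrow> real"
  assumes "\<forall>i j. i + 1 < n \<longrightarrow> j + 1 < m \<longrightarrow> c i j + c (i+1) (j+1) = c i (j+1) + c (i+1) j"
  shows "i < n \<Longrightarrow> j < m \<Longrightarrow> c i j = c i 0 + c 0 j - c 0 0"
proof -
  have D: "c (i+1) j - c i j = c (i+1) 0 - c i 0" if "i+1 < n" "j < m" for i j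
    using that(2)
  proof (induction j)
    case (Suc j)
    then show ?case using assms[rule_format, of i j] that(1) by auto
  qed simp
  show "i < n \<Longrightarrow> j < m \<Longrightarrow> c i j = c i 0 + c 0 j - c 0 0"
  proof (induction i)
    case (Suc i)
    then show ?case using D[of i j] by auto
  qed simp
qed

theorem theorem1:
  fixes n m :: nat and M Mh :: game
  defines "c \<equiv> \<lambda>i j. fst (Mh i j) - fst (M i j)"
  shows "obtainable_by_OI n m M Mh \<longleftrightarrow>
    ((\<forall>i<n. \<forall>j<m. fst (M i j) + snd (M i j) = fst (Mh i j) + snd (Mh i j)) \<and>
     (\<forall>i j. i + 1 < n \<longrightarrow> j + 1 < m \<longrightarrow>
        c i j + c (i+1) (j+1) = c i (j+1) + c (i+1) j))"
proof
  assume "obtainable_by_OI n m M Mh"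
  then obtain \<tau> where t: "\<tau> \<in> oi_trans n m" and e: "\<forall>i<n. \<forall>j<m. \<tau> M i j = Mh i j"
    unfolding obtainable_by_OI_def by blast
  obtain x y where h: "\<forall>i j. \<tau> M i j = (fst (M i j) + x i - y j, snd (M i j) - x i + y j)"
    using fwd_inv[OF t] by blast
  have Mh: "Mh i j = (fst (M i j) + x i - y j, snd (M i j) - x i + y j)" if "i<n" "j<m" for i j
    using e h that by metis
  show "(\<forall>i<n. \<forall>j<m. fst (M i j) + snd (M i j) = fst (Mh i j) + snd (Mh i j)) \<and>
     (\<forall>i j. i + 1 < n \<longrightarrow> j + 1 < m \<longrightarrow>
        c i j + c (i+1) (j+1) = c i (j+1) + c (i+1) j)"
    by (auto simp: Mh c_def)
next
  assume A: "(\<forall>i<n. \<forall>j<m. fst (M i j) + snd (M i j) = fst (Mh i j) + snd (Mh i j)) \<and>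
     (\<forall>i j. i + 1 < n \<longrightarrow> j + 1 < m \<longrightarrow>
        c i j + c (i+1) (j+1) = c i (j+1) + c (i+1) j)"
  define K where "K = (\<Sum>i<n. \<bar>c i 0\<bar>) + (\<Sum>j<m. \<bar>c 0 j\<bar>) + \<bar>c 0 0\<bar>"
  define x where "x i = c i 0 + K" for i
  define y where "y j = c 0 0 - c 0 j + K" for j
  have s1: "\<bar>c i 0\<bar> \<le> (\<Sum>i<n. \<bar>c i 0\<bar>)" if "i<n" for i
    using that by (intro member_le_sum) auto
  have s2: "\<bar>c 0 j\<bar> \<le> (\<Sum>j<m. \<bar>c 0 j\<bar>)" if "j<m" for j
    using that by (intro member_le_sum) auto
  have p1: "0 \<le> (\<Sum>i<n. \<bar>c i 0\<bar>)" "0 \<le> (\<Sum>j<m. \<bar>c 0 j\<bar>)"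
    by (auto intro: sum_nonneg)
  have xn: "\<forall>i<n. x i \<ge> 0"
  proof (intro allI impI)
    fix i assume "i<n"
    from s1[OF this] p1 show "x i \<ge> 0" unfolding x_def K_def by (smt (verit))
  qed
  have yn: "\<forall>j<m. y j \<ge> 0"
  proof (intro allI impI)
    fix j assume "j<m"
    from s2[OF this] p1 show "y j \<ge> 0" unfolding y_def K_def by (smt (verit))
  qed
  obtain \<tau>0 where t0: "\<tau>0\<in>oi_trans n m" and h0: "\<forall>M i j. \<tau>0 M i j =
     (fst (M i j) + (if i<n then x i else 0), snd (M i j) - (if i<n then x i else 0))"
    using rows[OF xn, of n m] by auto
  obtain \<tau> where t: "\<tau>\<in>oi_trans n m" and h: "\<forall>M i j. \<tau> M i j =
     (fst (\<tau>0 M i j) - (if j<m then y j else 0), snd (\<tau>0 M i j) + (if j<m then y j else 0))"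
    using cols[OF yn _ t0, of m] by auto
  have dec: "c i j = c i 0 + c 0 j - c 0 0" if "i<n" "j<m" for i j
    using c2_decomp[of n m c i j] A that by blast
  have "\<tau> M i j = Mh i j" if "i<n" "j<m" for i j
  proof -
    have "fst (Mh i j) = fst (M i j) + c i j" by (simp add: c_def)
    moreover have "snd (Mh i j) = snd (M i j) - c i j" proof -
      have "fst (M i j) + snd (M i j) = fst (Mh i j) + snd (Mh i j)" using A that by blast
      then show ?thesis by (simp add: c_def)
    qed
    ultimately show ?thesis using that dec[OF that]
      by (simp add: h h0 x_def y_def prod_eq_iff)
  qed
  then show "obtainable_by_OI n m M Mh"
    unfolding obtainable_by_OI_def using t by blast
qed

end
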